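(* For every $m\in\mathbb{N}$ we have $$N(2,3,3;2m)=N(1,3,3;m),\qquad t(2,3,3;8m+6)=2t(1,3,3;m),\qquad t(2,3,3;32m+27)=4t(1,3,3;m).$$ Moreover, for every $n\in\mathbb{Z}^+$ with $n\not\equiv 15\pmod{16}$ we have $$t(2,3,3;n)=\begin{cases} 4N(1,3,3;n+1)&\text{if } n\equiv 0,1\pmod 4,\\ 2N(1,3,3;n+1)&\text{if } n\equiv 2\pmod 8,\\ N(1,3,3;n+1)&\text{if } n\equiv 6\pmod 8 \text{ or } n\equiv 27\pmod{32},\\ \frac 85N(1,3,3;n+1)&\text{if } n\equiv 3,7\pmod{16},\\ \frac 43N(1,3,3;n+1)&\text{if } n\equiv 11\pmod{32}.\end{cases}$$
   Context: $\mathbb{Z}^+$ is the set of positive integers and $\mathbb{N}$ the set of nonnegative integers. For $a,b,c\in\mathbb{Z}^+$ and $n\in\mathbb{N}$, $N(a,b,c;n)$ denotes the number of triples $(x,y,z)\in\mathbb{Z}^3$ with $n=ax^2+by^2+cz^2$, and $t(a,b,c;n)$ denotes the number of triples $(x,y,z)\in\mathbb{Z}^3$ with $n=a\frac{x(x+1)}2+b\frac{y(y+1)}2+c\frac{z(z+1)}2$. *)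

theory Defs
  imports Complex_Main
begin

definition Nrep :: "nat \<Rightarrow> nat \<Rightarrow> nat \<Rightarrow> nat \<Rightarrow> nat" where
  "Nrep a b c n = card {(x::int, y::int, z::int).
      int n = int a * x^2 + int b * y^2 + int c * z^2}"

definition trep :: "nat \<Rightarrow> nat \<Rightarrow> nat \<Rightarrow> nat \<Rightarrow> nat" where
  "trep a b c n = card {(x::int, y::int, z::int).
      int n = int a * (x * (x + 1) div 2) + int b * (y * (y + 1) div 2)
              + int c * (z * (z + 1) div 2)}"

end

theory Submission
  imports Defs
begin


definition Qs :: "(int \<Rightarrow> int \<Rightarrow> int \<Rightarrow> bool) \<Rightarrow> int \<Rightarrow> nat" where
  "Qs P K = card {(x,y,z). P x y z \<and> x^2+3*y^2+3*z^2 = K}"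

lemma abs_le_sq: "\<bar>x::int\<bar> \<le> x^2"
proof (cases "x = 0")
  case False
  then have "1 \<le> \<bar>x\<bar>" by simp
  then have "\<bar>x\<bar> * 1 \<le> \<bar>x\<bar> * \<bar>x\<bar>" by (intro mult_left_mono) auto
  then show ?thesis by (simp add: power2_eq_square abs_mult[symmetric])
qed simp

lemma fin_sol: "finite {(x::int,y::int,z::int). x^2+3*y^2+3*z^2 = K}"
proof (rule finite_subset)
  show "{(x::int,y::int,z::int). x^2+3*y^2+3*z^2 = K} \<subseteq> {-K..K} \<times> {-K..K} \<times> {-K..K}"
  proof
    fix t assume "t \<in> {(x::int,y::int,z::int). x^2+3*y^2+3*z^2 = K}"
    then obtain x y z where t: "t = (x,y,z)" and e: "x^2+3*y^2+3*z^2 = K" by auto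
    have "\<bar>x\<bar> \<le> x^2" "\<bar>y\<bar> \<le> y^2" "\<bar>z\<bar> \<le> z^2" by (rule abs_le_sq)+
    moreover have "0 \<le> x^2" "0 \<le> y^2" "0 \<le> z^2" by simp_all
    ultimately have "\<bar>x\<bar> \<le> K \<and> \<bar>y\<bar> \<le> K \<and> \<bar>z\<bar> \<le> K" using e by linarith
    then show "t \<in> {-K..K} \<times> {-K..K} \<times> {-K..K}" using t by (auto simp: abs_le_iff)
  qed
qed simp

lemma fin_sub: fixes P :: "int \<Rightarrow> int \<Rightarrow> int \<Rightarrow> bool" shows "finite {(x,y,z). P x y z \<and> x^2+3*y^2+3*z^2 = K}"
  by (rule finite_subset[OF _ fin_sol[of K]]) auto

lemma Qs_split: "Qs P K = Qs (\<lambda>x y z. P x y z \<and> R x y z) K + Qs (\<lambda>x y z. P x y z \<and> \<not> R x y z) K"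
proof -
  have "{(x,y,z). P x y z \<and> x^2+3*y^2+3*z^2 = K} =
     {(x,y,z). (P x y z \<and> R x y z) \<and> x^2+3*y^2+3*z^2 = K} \<union> {(x,y,z). (P x y z \<and> \<not> R x y z) \<and> x^2+3*y^2+3*z^2 = K}"
    by auto
  then show ?thesis unfolding Qs_def
    by (simp only:) (rule card_Un_disjoint[OF fin_sub fin_sub], auto)
qed

lemma Qs_cong: "(\<And>x y z. x^2+3*y^2+3*z^2 = K \<Longrightarrow> P x y z = P' x y z) \<Longrightarrow> Qs P K = Qs P' K"
  unfolding Qs_def by (rule arg_cong[where f=card]) auto

lemma Qs_swap: "Qs P K = Qs (\<lambda>x y z. P x z y) K"
proof -
  have "bij_betw (\<lambda>(x,y,z). (x,z,y)) {(x,y,z). P x y z \<and> x^2+3*y^2+3*z^2 = K} {(x,y,z). P x z y \<and> x^2+3*y^2+3*z^2 = K}"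
    by (rule bij_betw_byWitness[where f'="\<lambda>(x,y,z). (x,z,y)"]) auto
  then show ?thesis unfolding Qs_def by (rule bij_betw_same_card)
qed

lemma Qs_scale: "Qs (\<lambda>x y z. even x \<and> even y \<and> even z) (4*K) = Qs (\<lambda>_ _ _. True) K"
proof -
  have "bij_betw (\<lambda>(x,y,z). (2*x,2*y,2*z)) {(x,y,z). True \<and> x^2+3*y^2+3*z^2 = K} {(x,y,z). (even x \<and> even y \<and> even z) \<and> x^2+3*y^2+3*z^2 = 4*K}"
  proof (rule bij_betw_byWitness[where f'="\<lambda>(x,y,z). (x div 2,y div 2,z div 2)"])
    show "(\<lambda>(x, y, z). (2 * x, 2 * y, 2 * z)) ` {(x, y, z). True \<and> x\<^sup>2 + 3 * y\<^sup>2 + 3 * z\<^sup>2 = K}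
    \<subseteq> {(x, y, z). (even x \<and> even y \<and> even z) \<and> x\<^sup>2 + 3 * y\<^sup>2 + 3 * z\<^sup>2 = 4 * K}"
    proof
      fix t assume "t \<in> (\<lambda>(x, y, z). (2 * x, 2 * y, 2 * z)) ` {(x, y, z). True \<and> x\<^sup>2 + 3 * y\<^sup>2 + 3 * z\<^sup>2 = K}"
      then obtain x y z where t: "t = (2*x,2*y,2*z)" and e: "x\<^sup>2 + 3 * y\<^sup>2 + 3 * z\<^sup>2 = K" by auto
      have "(2*x)^2+3*(2*y)^2+3*(2*z)^2 = 4*K" using e by (simp add: power_mult_distrib algebra_simps)
      then show "t \<in> {(x, y, z). (even x \<and> even y \<and> even z) \<and> x\<^sup>2 + 3 * y\<^sup>2 + 3 * z\<^sup>2 = 4 * K}" using t by simp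
    qed
    show "(\<lambda>(x, y, z). (x div 2, y div 2, z div 2)) ` {(x, y, z). (even x \<and> even y \<and> even z) \<and> x\<^sup>2 + 3 * y\<^sup>2 + 3 * z\<^sup>2 = 4 * K}
    \<subseteq> {(x, y, z). True \<and> x\<^sup>2 + 3 * y\<^sup>2 + 3 * z\<^sup>2 = K}"
    proof
      fix t assume "t \<in> (\<lambda>(x, y, z). (x div 2, y div 2, z div 2)) ` {(x, y, z). (even x \<and> even y \<and> even z) \<and> x\<^sup>2 + 3 * y\<^sup>2 + 3 * z\<^sup>2 = 4 * K}"
      then obtain x y z where t: "t = (x div 2, y div 2, z div 2)" and ev: "even x" "even y" "even z"
        and e: "x\<^sup>2 + 3 * y\<^sup>2 + 3 * z\<^sup>2 = 4*K" by auto
      define a b c where "a = x div 2" "b = y div 2" "c = z div 2"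
      have xyz: "x = 2*a" "y = 2*b" "z = 2*c" using ev a_b_c_def by simp_all
      have "4*(a^2+3*b^2+3*c^2) = 4*K" using e unfolding xyz by (simp add: power_mult_distrib algebra_simps)
      then have "a^2+3*b^2+3*c^2 = K" by simp
      then show "t \<in> {(x, y, z). True \<and> x\<^sup>2 + 3 * y\<^sup>2 + 3 * z\<^sup>2 = K}" using t a_b_c_def by simp
    qed
  next
    show "\<forall>a\<in>{(x, y, z). True \<and> x\<^sup>2 + 3 * y\<^sup>2 + 3 * z\<^sup>2 = K}. (\<lambda>(x,y,z). (x div 2,y div 2,z div 2)) ((\<lambda>(x,y,z). (2*x,2*y,2*z)) a) = a"
      by auto
  next
    show "\<forall>a\<in>{(x, y, z). (even x \<and> even y \<and> even z) \<and> x\<^sup>2 + 3 * y\<^sup>2 + 3 * z\<^sup>2 = 4 * K}. (\<lambda>(x,y,z). (2*x,2*y,2*z)) ((\<lambda>(x,y,z). (x div 2,y div 2,z div 2)) a) = a"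
      by auto
  qed
  from bij_betw_same_card[OF this] show ?thesis unfolding Qs_def by simp
qed

lemma mod3: "((a::int) + 3*b + 3*c) mod 8 = (a mod 8 + 3*(b mod 8) + 3*(c mod 8)) mod 8"
proof -
  have lin: "\<And>a b c ra rb rc qa qb qc::int. a = ra + 8*qa \<Longrightarrow> b = rb + 8*qb \<Longrightarrow> c = rc + 8*qc \<Longrightarrow>
     a+3*b+3*c = (ra+3*rb+3*rc) + 8*(qa+3*qb+3*qc)" by simp
  have "a + 3*b + 3*c = (a mod 8 + 3*(b mod 8) + 3*(c mod 8)) + 8*(a div 8 + 3*(b div 8) + 3*(c div 8))"
    by (rule lin) simp_all
  then show ?thesis by (simp only: mod_mult_self2)
qed
lemma sq8: "(x::int)^2 mod 8 = (if odd x then 1 else if x mod 4 = 0 then 0 else 4)"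
proof -
  define q r where "q = x div 8" "r = x mod 8"
  have x: "x = r + 8*q" using q_r_def by simp
  have "x^2 = r^2 + 8*(2*q*r + 8*q^2)" unfolding x by (simp add: power2_eq_square algebra_simps)
  then have 1: "x^2 mod 8 = r^2 mod 8" by (simp only: mod_mult_self2)
  have 2: "odd x \<longleftrightarrow> odd r" unfolding x by simp
  have 3: "x mod 4 = r mod 4" unfolding x by presburger
  have "r=0 \<or> r=1 \<or> r=2 \<or> r=3 \<or> r=4 \<or> r=5 \<or> r=6 \<or> r=7" using q_r_def by presburger
  then show ?thesis unfolding 1 2 3 by (elim disjE) (simp_all add: power2_eq_square)
qed
lemma par8: fixes x y z :: int assumes "x^2+3*y^2+3*z^2 = K"
  shows "K mod 8 = ((if odd x then 1 else if x mod 4 = 0 then 0 else 4) + 3*(if odd y then 1 else if y mod 4 = 0 then 0 else 4)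
     + 3*(if odd z then 1 else if z mod 4 = 0 then 0 else 4)) mod 8"
proof -
  have "K mod 8 = (x^2 mod 8 + 3*(y^2 mod 8) + 3*(z^2 mod 8)) mod 8" using assms[symmetric] mod3 by simp
  then show ?thesis by (simp only: sq8)
qed

lemma odd4: "odd (x::int) \<Longrightarrow> odd y \<Longrightarrow> (4 dvd (x+y)) \<longleftrightarrow> \<not> (4 dvd (x-y))"
  by presburger

lemma eis:
  fixes P :: "int \<Rightarrow> bool" and g :: "int \<Rightarrow> int"
  shows "card {(x,y,z). odd x \<and> odd y \<and> P z \<and> x^2+3*y^2 = 4*g z}
       = 2 * card {(a,b,z). odd (a+b) \<and> P z \<and> a^2+3*b^2 = g z}"
proof -
  define R where "R = {(a,b,z). odd (a+b) \<and> P z \<and> a^2+3*b^2 = g z}"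
  define L where "L = {(x,y,z). odd x \<and> odd y \<and> P z \<and> x^2+3*y^2 = 4*g z}"
  define L1 where "L1 = {(x,y,z). (odd x \<and> odd y \<and> P z \<and> x^2+3*y^2 = 4*g z) \<and> 4 dvd (x-y)}"
  define L2 where "L2 = {(x,y,z). (odd x \<and> odd y \<and> P z \<and> x^2+3*y^2 = 4*g z) \<and> \<not> 4 dvd (x-y)}"
  define f1 where "f1 = (\<lambda>(a::int,b::int,z::int). (a+3*b, a-b, z))"
  define h1 where "h1 = (\<lambda>(x::int,y::int,z::int). ((x+3*y) div 4, (x-y) div 4, z))"
  define f2 where "f2 = (\<lambda>(a::int,b::int,z::int). (a+3*b, b-a, z))"
  define h2 where "h2 = (\<lambda>(x::int,y::int,z::int). ((x-3*y) div 4, (x+y) div 4, z))"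
  have LU: "L = L1 \<union> L2" "L1 \<inter> L2 = {}" unfolding L_def L1_def L2_def by auto
  have b1: "bij_betw f1 R L1"
  proof (rule bij_betw_byWitness[where f'=h1])
    show "\<forall>t\<in>R. h1 (f1 t) = t"
    proof
      fix t assume "t \<in> R"
      then obtain a b z where t: "t = (a,b,z)" by (cases t) auto
      have "a + 3*b + 3*(a-b) = 4*a" "a + 3*b - (a-b) = 4*b" by simp_all
      then show "h1 (f1 t) = t" unfolding t f1_def h1_def by simp
    qed
    show "\<forall>t\<in>L1. f1 (h1 t) = t"
    proof
      fix t assume "t \<in> L1"
      then obtain x y z where t: "t = (x,y,z)" and d: "4 dvd (x-y)" unfolding L1_def by auto
      then obtain k where k: "x - y = 4*k" by (auto elim: dvdE)
      have x: "x = y + 4*k" using k by simp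
      have "(x+3*y) div 4 = k + y" "(x-y) div 4 = k" unfolding x by simp_all
      then show "f1 (h1 t) = t" unfolding t f1_def h1_def using x by simp
    qed
    show "f1 ` R \<subseteq> L1"
    proof
      fix t assume "t \<in> f1 ` R"
      then obtain a b z where t: "t = f1 (a,b,z)" and ab: "odd (a+b)" "P z" "a^2+3*b^2 = g z"
        unfolding R_def by auto
      have "(a+3*b)^2 + 3*(a-b)^2 = 4*(a^2+3*b^2)" by (simp add: power2_eq_square algebra_simps)
      then have "(a+3*b)^2 + 3*(a-b)^2 = 4*g z" using ab(3) by simp
      moreover have "odd (a+3*b)" "odd (a-b)" "4 dvd (a+3*b-(a-b))" using ab(1) by presburger+
      ultimately show "t \<in> L1" unfolding t f1_def L1_def using ab by simp
    qed
    show "h1 ` L1 \<subseteq> R"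
    proof
      fix t assume "t \<in> h1 ` L1"
      then obtain x y z where t: "t = h1 (x,y,z)" and xy: "odd x" "odd y" "P z" "x^2+3*y^2 = 4*g z"
        and d: "4 dvd (x-y)" unfolding L1_def by auto
      then obtain k where k: "x - y = 4*k" by (auto elim: dvdE)
      have x: "x = y + 4*k" using k by simp
      have hh: "(x+3*y) div 4 = k + y" "(x-y) div 4 = k" unfolding x by simp_all
      have "x^2+3*y^2 = 4*((k+y)^2 + 3*k^2)" unfolding x by (simp add: power2_eq_square algebra_simps)
      then have "(k+y)^2 + 3*k^2 = g z" using xy(4) by simp
      moreover have "odd (k + y + k)" using xy(2) by presburger
      ultimately show "t \<in> R" unfolding t h1_def R_def using xy by (simp add: hh)
    qed
  qed
  have b2: "bij_betw f2 R L2"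
  proof (rule bij_betw_byWitness[where f'=h2])
    show "\<forall>t\<in>R. h2 (f2 t) = t"
    proof
      fix t assume "t \<in> R"
      then obtain a b z where t: "t = (a,b,z)" by (cases t) auto
      have "a + 3*b - 3*(b-a) = 4*a" "a + 3*b + (b-a) = 4*b" by simp_all
      then show "h2 (f2 t) = t" unfolding t f2_def h2_def by simp
    qed
    show "\<forall>t\<in>L2. f2 (h2 t) = t"
    proof
      fix t assume "t \<in> L2"
      then obtain x y z where t: "t = (x,y,z)" and d: "\<not> 4 dvd (x-y)" "odd x" "odd y" unfolding L2_def by auto
      then have "4 dvd (x+y)" using odd4 by blast
      then obtain k where k: "x + y = 4*k" by (auto elim: dvdE)
      have x: "x = 4*k - y" using k by simp
      have "(x-3*y) div 4 = k - y" "(x+y) div 4 = k" unfolding x by simp_all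
      then show "f2 (h2 t) = t" unfolding t f2_def h2_def using x by simp
    qed
    show "f2 ` R \<subseteq> L2"
    proof
      fix t assume "t \<in> f2 ` R"
      then obtain a b z where t: "t = f2 (a,b,z)" and ab: "odd (a+b)" "P z" "a^2+3*b^2 = g z"
        unfolding R_def by auto
      have "(a+3*b)^2 + 3*(b-a)^2 = 4*(a^2+3*b^2)" by (simp add: power2_eq_square algebra_simps)
      then have "(a+3*b)^2 + 3*(b-a)^2 = 4*g z" using ab(3) by simp
      moreover have "odd (a+3*b)" "odd (b-a)" "\<not> 4 dvd (a+3*b-(b-a))" using ab(1) by presburger+
      ultimately show "t \<in> L2" unfolding t f2_def L2_def using ab by simp
    qed
    show "h2 ` L2 \<subseteq> R"
    proof
      fix t assume "t \<in> h2 ` L2"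
      then obtain x y z where t: "t = h2 (x,y,z)" and xy: "odd x" "odd y" "P z" "x^2+3*y^2 = 4*g z"
        and d: "\<not> 4 dvd (x-y)" unfolding L2_def by auto
      then have "4 dvd (x+y)" using odd4 by blast
      then obtain k where k: "x + y = 4*k" by (auto elim: dvdE)
      have x: "x = 4*k - y" using k by simp
      have hh: "(x-3*y) div 4 = k - y" "(x+y) div 4 = k" unfolding x by simp_all
      have "x^2+3*y^2 = 4*((k-y)^2 + 3*k^2)" unfolding x by (simp add: power2_eq_square algebra_simps)
      then have "(k-y)^2 + 3*k^2 = g z" using xy(4) by simp
      moreover have "odd (k - y + k)" using xy(2) by presburger
      ultimately show "t \<in> R" unfolding t h2_def R_def using xy by (simp add: hh)
    qed
  qed
  have c1: "card L1 = card R" and c2: "card L2 = card R"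
    using bij_betw_same_card[OF b1] bij_betw_same_card[OF b2] by simp_all
  show ?thesis
  proof (cases "finite R")
    case True
    then have "finite L1" "finite L2" using bij_betw_finite[OF b1] bij_betw_finite[OF b2] by simp_all
    then have "card L = card L1 + card L2" unfolding LU(1) using LU(2) by (simp add: card_Un_disjoint)
    then show ?thesis unfolding L_def R_def[symmetric] using c1 c2 by simp
  next
    case False
    then have "infinite L1" using bij_betw_finite[OF b1] by simp
    then have "infinite L" unfolding LU(1) by simp
    then show ?thesis unfolding L_def R_def[symmetric] using False by simp
  qed
qed

lemma Qs_E3: "Qs (\<lambda>x y z. odd x \<and> odd y \<and> even z) (4*K) = 2 * Qs (\<lambda>x y z. odd (x+y)) K"
proof -
  define f where "f = (\<lambda>(x::int,y::int,c::int). (x,y,2*c))"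
  define h where "h = (\<lambda>(x::int,y::int,z::int). (x,y,z div 2))"
  have "bij_betw f {(x,y,c). odd x \<and> odd y \<and> (\<lambda>_. True) c \<and> x^2+3*y^2 = 4*((\<lambda>c. K - 3*c^2) c)}
     {(x,y,z). (odd x \<and> odd y \<and> even z) \<and> x^2+3*y^2+3*z^2 = 4*K}"
  proof (rule bij_betw_byWitness[where f'=h])
    show "\<forall>t\<in>{(x,y,c). odd x \<and> odd y \<and> (\<lambda>_. True) c \<and> x^2+3*y^2 = 4*((\<lambda>c. K - 3*c^2) c)}. h (f t) = t"
      unfolding f_def h_def by auto
    show "\<forall>t\<in>{(x,y,z). (odd x \<and> odd y \<and> even z) \<and> x^2+3*y^2+3*z^2 = 4*K}. f (h t) = t"
      unfolding f_def h_def by auto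
    show "f ` {(x,y,c). odd x \<and> odd y \<and> (\<lambda>_. True) c \<and> x^2+3*y^2 = 4*((\<lambda>c. K - 3*c^2) c)}
       \<subseteq> {(x,y,z). (odd x \<and> odd y \<and> even z) \<and> x^2+3*y^2+3*z^2 = 4*K}"
    proof
      fix t assume "t \<in> f ` {(x,y,c). odd x \<and> odd y \<and> (\<lambda>_. True) c \<and> x^2+3*y^2 = 4*((\<lambda>c. K - 3*c^2) c)}"
      then obtain x y c where t: "t = f (x,y,c)" and h: "odd x" "odd y" "x^2+3*y^2 = 4*(K - 3*c^2)" by auto
      have "x^2+3*y^2+3*(2*c)^2 = 4*K" using h(3) by (simp add: power_mult_distrib algebra_simps)
      then show "t \<in> {(x,y,z). (odd x \<and> odd y \<and> even z) \<and> x^2+3*y^2+3*z^2 = 4*K}"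
        unfolding t f_def using h by simp
    qed
    show "h ` {(x,y,z). (odd x \<and> odd y \<and> even z) \<and> x^2+3*y^2+3*z^2 = 4*K}
       \<subseteq> {(x,y,c). odd x \<and> odd y \<and> (\<lambda>_. True) c \<and> x^2+3*y^2 = 4*((\<lambda>c. K - 3*c^2) c)}"
    proof
      fix t assume "t \<in> h ` {(x,y,z). (odd x \<and> odd y \<and> even z) \<and> x^2+3*y^2+3*z^2 = 4*K}"
      then obtain x y z where t: "t = h (x,y,z)" and hh: "odd x" "odd y" "even z" "x^2+3*y^2+3*z^2 = 4*K" by auto
      define c where "c = z div 2"
      have z: "z = 2*c" using hh(3) c_def by simp
      have "x^2+3*y^2 = 4*(K - 3*c^2)" using hh(4) unfolding z by (simp add: power_mult_distrib algebra_simps)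
      then show "t \<in> {(x,y,c). odd x \<and> odd y \<and> (\<lambda>_. True) c \<and> x^2+3*y^2 = 4*((\<lambda>c. K - 3*c^2) c)}"
        unfolding t h_def using hh c_def by simp
    qed
  qed
  then have "Qs (\<lambda>x y z. odd x \<and> odd y \<and> even z) (4*K) =
     card {(x,y,c). odd x \<and> odd y \<and> (\<lambda>_. True) c \<and> x^2+3*y^2 = 4*((\<lambda>c. K - 3*c^2) c)}"
    unfolding Qs_def by (simp add: bij_betw_same_card)
  also have "\<dots> = 2 * card {(a,b,c). odd (a+b) \<and> (\<lambda>_. True) c \<and> a^2+3*b^2 = (\<lambda>c. K - 3*c^2) c}"
    by (rule eis)
  also have "{(a,b,c). odd (a+b) \<and> (\<lambda>_. True) c \<and> a^2+3*b^2 = (\<lambda>c. K - 3*c^2) c}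
     = {(x,y,z). odd (x+y) \<and> x^2+3*y^2+3*z^2 = K}" by auto
  finally show ?thesis unfolding Qs_def .
qed

lemma aux7: "(K::int) mod 8 = 7 \<Longrightarrow> w mod 8 = 1 \<Longrightarrow> K - 3*w = 4*((K-3*w) div 4) \<and> odd ((K-3*w) div 4)"
  by presburger

lemma odd_form: "odd ((a::int)^2+3*b^2) \<Longrightarrow> odd (a+b)"
  by simp

lemma Qs_E4: assumes K: "K mod 8 = 7"
  shows "Qs (\<lambda>x y z. odd x \<and> odd y \<and> odd z) K = 2 * Qs (\<lambda>x y z. even x \<and> even y \<and> odd z) K"
proof -
  have A: "\<And>z. odd z \<Longrightarrow> K - 3*z^2 = 4*((K-3*z^2) div 4) \<and> odd ((K-3*z^2) div 4)"
    using aux7[OF K] sq8 by simp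
  have "{(x,y,z). odd x \<and> odd y \<and> odd z \<and> x^2+3*y^2+3*z^2 = K} =
        {(x,y,z). odd x \<and> odd y \<and> odd z \<and> x^2+3*y^2 = 4*((\<lambda>z. (K-3*z^2) div 4) z)}"
  proof (intro set_eqI iffI)
    fix t assume "t \<in> {(x,y,z). odd x \<and> odd y \<and> odd z \<and> x^2+3*y^2+3*z^2 = K}"
    then obtain x y z where t: "t = (x,y,z)" and h: "odd x" "odd y" "odd z" "x^2+3*y^2+3*z^2 = K" by auto
    have "x^2+3*y^2 = K - 3*z^2" using h(4) by simp
    also have "\<dots> = 4*((K-3*z^2) div 4)" using A[OF h(3)] by simp
    finally show "t \<in> {(x,y,z). odd x \<and> odd y \<and> odd z \<and> x^2+3*y^2 = 4*((\<lambda>z. (K-3*z^2) div 4) z)}"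
      using t h by simp
  next
    fix t assume "t \<in> {(x,y,z). odd x \<and> odd y \<and> odd z \<and> x^2+3*y^2 = 4*((\<lambda>z. (K-3*z^2) div 4) z)}"
    then obtain x y z where t: "t = (x,y,z)" and h: "odd x" "odd y" "odd z" "x^2+3*y^2 = 4*((K-3*z^2) div 4)" by auto
    have "x^2+3*y^2 = K - 3*z^2" using h(4) A[OF h(3)] by simp
    then show "t \<in> {(x,y,z). odd x \<and> odd y \<and> odd z \<and> x^2+3*y^2+3*z^2 = K}" using t h by simp
  qed
  then have "Qs (\<lambda>x y z. odd x \<and> odd y \<and> odd z) K =
     card {(x,y,z). odd x \<and> odd y \<and> odd z \<and> x^2+3*y^2 = 4*((\<lambda>z. (K-3*z^2) div 4) z)}"
    unfolding Qs_def by simp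
  also have "\<dots> = 2 * card {(a,b,z). odd (a+b) \<and> odd z \<and> a^2+3*b^2 = (\<lambda>z. (K-3*z^2) div 4) z}"
    by (rule eis)
  also have "card {(a,b,z). odd (a+b) \<and> odd z \<and> a^2+3*b^2 = (\<lambda>z. (K-3*z^2) div 4) z}
      = Qs (\<lambda>x y z. even x \<and> even y \<and> odd z) K"
  proof -
    define f where "f = (\<lambda>(a::int,b::int,z::int). (2*a,2*b,z))"
    define h where "h = (\<lambda>(x::int,y::int,z::int). (x div 2,y div 2,z))"
    have "bij_betw f {(a,b,z). odd (a+b) \<and> odd z \<and> a^2+3*b^2 = (\<lambda>z. (K-3*z^2) div 4) z}
      {(x,y,z). (even x \<and> even y \<and> odd z) \<and> x^2+3*y^2+3*z^2 = K}"
    proof (rule bij_betw_byWitness[where f'=h])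
      show "\<forall>t\<in>{(a,b,z). odd (a+b) \<and> odd z \<and> a^2+3*b^2 = (\<lambda>z. (K-3*z^2) div 4) z}. h (f t) = t"
        unfolding f_def h_def by auto
      show "\<forall>t\<in>{(x,y,z). (even x \<and> even y \<and> odd z) \<and> x^2+3*y^2+3*z^2 = K}. f (h t) = t"
        unfolding f_def h_def by auto
      show "f ` {(a,b,z). odd (a+b) \<and> odd z \<and> a^2+3*b^2 = (\<lambda>z. (K-3*z^2) div 4) z}
         \<subseteq> {(x,y,z). (even x \<and> even y \<and> odd z) \<and> x^2+3*y^2+3*z^2 = K}"
      proof
        fix t assume "t \<in> f ` {(a,b,z). odd (a+b) \<and> odd z \<and> a^2+3*b^2 = (\<lambda>z. (K-3*z^2) div 4) z}"
        then obtain a b z where t: "t = f (a,b,z)" and h: "odd (a+b)" "odd z" "a^2+3*b^2 = (K-3*z^2) div 4" by auto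
        have "(2*a)^2+3*(2*b)^2+3*z^2 = 4*(a^2+3*b^2) + 3*z^2" by (simp add: power_mult_distrib algebra_simps)
        also have "\<dots> = K" using h(3) A[OF h(2)] by simp
        finally show "t \<in> {(x,y,z). (even x \<and> even y \<and> odd z) \<and> x^2+3*y^2+3*z^2 = K}"
          unfolding t f_def using h by simp
      qed
      show "h ` {(x,y,z). (even x \<and> even y \<and> odd z) \<and> x^2+3*y^2+3*z^2 = K}
         \<subseteq> {(a,b,z). odd (a+b) \<and> odd z \<and> a^2+3*b^2 = (\<lambda>z. (K-3*z^2) div 4) z}"
      proof
        fix t assume "t \<in> h ` {(x,y,z). (even x \<and> even y \<and> odd z) \<and> x^2+3*y^2+3*z^2 = K}"
        then obtain x y z where t: "t = h (x,y,z)" and hh: "even x" "even y" "odd z" "x^2+3*y^2+3*z^2 = K" by auto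
        define a b where "a = x div 2" "b = y div 2"
        have xy: "x = 2*a" "y = 2*b" using hh a_b_def by simp_all
        have "4*(a^2+3*b^2) = K - 3*z^2" using hh(4) unfolding xy by (simp add: power_mult_distrib algebra_simps)
        then have "4*(a^2+3*b^2) = 4*((K-3*z^2) div 4)" using conjunct1[OF A[OF hh(3)]] by (rule trans)
        then have e: "a^2+3*b^2 = (K-3*z^2) div 4" by simp
        then have "odd (a^2+3*b^2)" using A[OF hh(3)] by simp
        then have "odd (a+b)" by (rule odd_form)
        then show "t \<in> {(a,b,z). odd (a+b) \<and> odd z \<and> a^2+3*b^2 = (\<lambda>z. (K-3*z^2) div 4) z}"
          unfolding t h_def using hh e a_b_def by simp
      qed
    qed
    then show ?thesis unfolding Qs_def by (simp add: bij_betw_same_card)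
  qed
  finally show ?thesis .
qed



lemma pcl1: "(K::int) = X + 3*Y + 3*Z \<Longrightarrow> X mod 8 = 1 \<Longrightarrow> Y mod 8 = 1 \<Longrightarrow> Z mod 8 = 1 \<Longrightarrow> K mod 8 = 7" by presburger
lemma pcl2: "(K::int) = X + 3*Y + 3*Z \<Longrightarrow> X mod 8 = 1 \<Longrightarrow> Y mod 8 = 1 \<Longrightarrow> Z mod 4 = 0 \<Longrightarrow> K mod 4 = 0" by presburger
lemma pcl3: "(K::int) = X + 3*Y + 3*Z \<Longrightarrow> X mod 8 = 1 \<Longrightarrow> Y mod 4 = 0 \<Longrightarrow> Z mod 8 = 1 \<Longrightarrow> K mod 4 = 0" by presburger
lemma pcl4: "(K::int) = X + 3*Y + 3*Z \<Longrightarrow> X mod 8 = 1 \<Longrightarrow> Y mod 4 = 0 \<Longrightarrow> Z mod 4 = 0 \<Longrightarrow> K mod 4 = 1" by presburger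
lemma pcl5: "(K::int) = X + 3*Y + 3*Z \<Longrightarrow> X mod 4 = 0 \<Longrightarrow> Y mod 8 = 1 \<Longrightarrow> Z mod 8 = 1 \<Longrightarrow> K mod 4 = 2" by presburger
lemma pcl6: "(K::int) = X + 3*Y + 3*Z \<Longrightarrow> X mod 4 = 0 \<Longrightarrow> Y mod 8 = 1 \<Longrightarrow> Z mod 4 = 0 \<Longrightarrow> K mod 4 = 3" by presburger
lemma pcl7: "(K::int) = X + 3*Y + 3*Z \<Longrightarrow> X mod 4 = 0 \<Longrightarrow> Y mod 4 = 0 \<Longrightarrow> Z mod 8 = 1 \<Longrightarrow> K mod 4 = 3" by presburger
lemma pcl8: "(K::int) = X + 3*Y + 3*Z \<Longrightarrow> X mod 4 = 0 \<Longrightarrow> Y mod 4 = 0 \<Longrightarrow> Z mod 4 = 0 \<Longrightarrow> K mod 4 = 0" by presburger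

lemma sq_odd: "odd (x::int) \<Longrightarrow> x^2 mod 8 = 1" using sq8[of x] by simp
lemma sq_even: "even (x::int) \<Longrightarrow> x^2 mod 4 = 0" by (auto elim!: evenE simp: power_mult_distrib)

lemma par_class: fixes x y z :: int assumes e: "x^2+3*y^2+3*z^2 = K"
  shows "(odd x \<and> odd y \<and> odd z \<longrightarrow> K mod 8 = 7) \<and> (odd x \<and> odd y \<and> even z \<longrightarrow> K mod 4 = 0)
    \<and> (odd x \<and> even y \<and> odd z \<longrightarrow> K mod 4 = 0) \<and> (odd x \<and> even y \<and> even z \<longrightarrow> K mod 4 = 1)
    \<and> (even x \<and> odd y \<and> odd z \<longrightarrow> K mod 4 = 2) \<and> (even x \<and> odd y \<and> even z \<longrightarrow> K mod 4 = 3)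
    \<and> (even x \<and> even y \<and> odd z \<longrightarrow> K mod 4 = 3) \<and> (even x \<and> even y \<and> even z \<longrightarrow> K mod 4 = 0)"
  using pcl1[OF e[symmetric]] pcl2[OF e[symmetric]] pcl3[OF e[symmetric]] pcl4[OF e[symmetric]]
    pcl5[OF e[symmetric]] pcl6[OF e[symmetric]] pcl7[OF e[symmetric]] pcl8[OF e[symmetric]]
  by (simp add: sq_odd sq_even)

definition rr :: "int \<Rightarrow> nat" where "rr K = Qs (\<lambda>_ _ _. True) K"
definition ss :: "int \<Rightarrow> nat" where "ss K = Qs (\<lambda>x y z. odd (x+y)) K"
definition AA :: "int \<Rightarrow> nat" where "AA K = Qs (\<lambda>x y z. odd x \<and> odd (y+z)) (4*K)"
definition C111 :: "int \<Rightarrow> nat" where "C111 K = Qs (\<lambda>x y z. odd x \<and> odd y \<and> odd z) K"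

lemma AA_eq: "AA K = 4 * ss K"
proof -
  have "AA K = Qs (\<lambda>x y z. (odd x \<and> odd (y+z)) \<and> odd y) (4*K) + Qs (\<lambda>x y z. (odd x \<and> odd (y+z)) \<and> \<not> odd y) (4*K)"
    unfolding AA_def by (rule Qs_split)
  also have "Qs (\<lambda>x y z. (odd x \<and> odd (y+z)) \<and> odd y) (4*K) = Qs (\<lambda>x y z. odd x \<and> odd y \<and> even z) (4*K)"
    by (rule Qs_cong) auto
  also have "Qs (\<lambda>x y z. (odd x \<and> odd (y+z)) \<and> \<not> odd y) (4*K) = Qs (\<lambda>x y z. (odd x \<and> odd (z+y)) \<and> \<not> odd z) (4*K)"
    by (rule Qs_swap)
  also have "\<dots> = Qs (\<lambda>x y z. odd x \<and> odd y \<and> even z) (4*K)"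
    by (rule Qs_cong) auto
  finally show ?thesis unfolding Qs_E3 ss_def by simp
qed

lemma mod4K: "(4*(K::int)) mod 8 \<noteq> 7" by presburger

lemma rr4: "rr (4*K) = rr K + AA K"
proof -
  have "rr (4*K) = Qs (\<lambda>x y z. True \<and> (even x \<and> even y \<and> even z)) (4*K) + Qs (\<lambda>x y z. True \<and> \<not> (even x \<and> even y \<and> even z)) (4*K)"
    unfolding rr_def by (rule Qs_split)
  also have "Qs (\<lambda>x y z. True \<and> (even x \<and> even y \<and> even z)) (4*K) = rr K"
    unfolding rr_def by (simp add: Qs_scale)
  also have "Qs (\<lambda>x y z. True \<and> \<not> (even x \<and> even y \<and> even z)) (4*K) = AA K"
    unfolding AA_def
  proof (rule Qs_cong)
    fix x y z :: int assume e: "x^2+3*y^2+3*z^2 = 4*K"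
    show "(True \<and> \<not> (even x \<and> even y \<and> even z)) = (odd x \<and> odd (y+z))"
      using par_class[OF e] mod4K[of K] by (cases "odd x"; cases "odd y"; cases "odd z") auto
  qed
  finally show ?thesis .
qed

lemma ss4: "ss (4*K) = 2 * ss K"
proof -
  have "ss (4*K) = Qs (\<lambda>x y z. odd x \<and> odd z \<and> even y) (4*K)"
    unfolding ss_def
  proof (rule Qs_cong)
    fix x y z :: int assume e: "x^2+3*y^2+3*z^2 = 4*K"
    show "odd (x+y) = (odd x \<and> odd z \<and> even y)"
      using par_class[OF e] mod4K[of K] by (cases "odd x"; cases "odd y"; cases "odd z") auto
  qed
  also have "\<dots> = Qs (\<lambda>x y z. odd x \<and> odd y \<and> even z) (4*K)"
    by (rule Qs_swap[symmetric])
  finally show ?thesis unfolding Qs_E3 ss_def .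
qed

lemma s12: assumes "K mod 4 = 1 \<or> K mod 4 = 2" shows "ss K = rr K"
  unfolding ss_def rr_def
proof (rule Qs_cong)
  fix x y z :: int assume e: "x^2+3*y^2+3*z^2 = K"
  have "K mod 8 = 1 \<or> K mod 8 = 2 \<or> K mod 8 = 5 \<or> K mod 8 = 6" using assms by presburger
  then have "K mod 8 \<noteq> 7" by presburger
  then show "odd (x+y) = True" using par_class[OF e] assms by (cases "odd x"; cases "odd y"; cases "odd z") auto
qed

lemma s3: assumes "K mod 8 = 3" shows "rr K = 2 * ss K"
proof -
  have Kf: "K mod 4 = 3" using assms by presburger
  have "rr K = Qs (\<lambda>x y z. True \<and> odd (x+y)) K + Qs (\<lambda>x y z. True \<and> \<not> odd (x+y)) K"
    unfolding rr_def by (rule Qs_split)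
  also have "Qs (\<lambda>x y z. True \<and> odd (x+y)) K = ss K" unfolding ss_def by simp
  also have "Qs (\<lambda>x y z. True \<and> \<not> odd (x+y)) K = Qs (\<lambda>x y z. even x \<and> even y \<and> odd z) K"
  proof (rule Qs_cong)
    fix x y z :: int assume e: "x^2+3*y^2+3*z^2 = K"
    show "(True \<and> \<not> odd (x+y)) = (even x \<and> even y \<and> odd z)"
      using par_class[OF e] assms Kf by (cases "odd x"; cases "odd y"; cases "odd z") auto
  qed
  also have "\<dots> = Qs (\<lambda>x y z. even x \<and> even z \<and> odd y) K" by (rule Qs_swap)
  also have "\<dots> = ss K" unfolding ss_def
  proof (rule Qs_cong)
    fix x y z :: int assume e: "x^2+3*y^2+3*z^2 = K"
    show "(even x \<and> even z \<and> odd y) = odd (x+y)"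
      using par_class[OF e] assms Kf by (cases "odd x"; cases "odd y"; cases "odd z") auto
  qed
  finally show ?thesis by simp
qed

lemma s7: assumes "K mod 8 = 7" shows "rr K = 4 * ss K" "C111 K = 2 * ss K"
proof -
  have Kf: "K mod 4 = 3" using assms by presburger
  have q: "Qs (\<lambda>x y z. even x \<and> even y \<and> odd z) K = ss K"
  proof -
    have "Qs (\<lambda>x y z. even x \<and> even y \<and> odd z) K = Qs (\<lambda>x y z. even x \<and> even z \<and> odd y) K" by (rule Qs_swap)
    also have "\<dots> = ss K" unfolding ss_def
    proof (rule Qs_cong)
      fix x y z :: int assume e: "x^2+3*y^2+3*z^2 = K"
      show "(even x \<and> even z \<and> odd y) = odd (x+y)"
        using par_class[OF e] assms Kf by (cases "odd x"; cases "odd y"; cases "odd z") auto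
    qed
    finally show ?thesis .
  qed
  show c: "C111 K = 2 * ss K" unfolding C111_def Qs_E4[OF assms] q ..
  have "rr K = Qs (\<lambda>x y z. True \<and> odd (x+y)) K + Qs (\<lambda>x y z. True \<and> \<not> odd (x+y)) K"
    unfolding rr_def by (rule Qs_split)
  also have "Qs (\<lambda>x y z. True \<and> odd (x+y)) K = ss K" unfolding ss_def by simp
  also have "Qs (\<lambda>x y z. True \<and> \<not> odd (x+y)) K = Qs (\<lambda>x y z. (True \<and> \<not> odd (x+y)) \<and> odd x) K
     + Qs (\<lambda>x y z. (True \<and> \<not> odd (x+y)) \<and> \<not> odd x) K" by (rule Qs_split)
  also have "Qs (\<lambda>x y z. (True \<and> \<not> odd (x+y)) \<and> odd x) K = C111 K" unfolding C111_def
  proof (rule Qs_cong)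
    fix x y z :: int assume e: "x^2+3*y^2+3*z^2 = K"
    show "((True \<and> \<not> odd (x+y)) \<and> odd x) = (odd x \<and> odd y \<and> odd z)"
      using par_class[OF e] assms Kf by (cases "odd x"; cases "odd y"; cases "odd z") auto
  qed
  also have "Qs (\<lambda>x y z. (True \<and> \<not> odd (x+y)) \<and> \<not> odd x) K = Qs (\<lambda>x y z. even x \<and> even y \<and> odd z) K"
  proof (rule Qs_cong)
    fix x y z :: int assume e: "x^2+3*y^2+3*z^2 = K"
    show "((True \<and> \<not> odd (x+y)) \<and> \<not> odd x) = (even x \<and> even y \<and> odd z)"
      using par_class[OF e] assms Kf by (cases "odd x"; cases "odd y"; cases "odd z") auto
  qed
  finally show "rr K = 4 * ss K" using c q by simp
qed


lemma nrep133: "Nrep 1 3 3 k = rr (int k)"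
  unfolding Nrep_def rr_def Qs_def by (rule arg_cong[where f=card]) auto

lemma nrep233: "Nrep 2 3 3 (2*m) = rr (int m)"
proof -
  define f where "f = (\<lambda>(x::int,u::int,v::int). (x,u+v,u-v))"
  define h where "h = (\<lambda>(x::int,y::int,z::int). (x,(y+z) div 2,(y-z) div 2))"
  have "bij_betw f {(x,y,z). True \<and> x^2+3*y^2+3*z^2 = int m}
     {(x,y,z). int (2*m) = int 2 * x^2 + int 3 * y^2 + int 3 * z^2}"
  proof (rule bij_betw_byWitness[where f'=h])
    show "\<forall>t\<in>{(x,y,z). True \<and> x^2+3*y^2+3*z^2 = int m}. h (f t) = t"
      unfolding f_def h_def by auto
    show "\<forall>t\<in>{(x,y,z). int (2*m) = int 2 * x^2 + int 3 * y^2 + int 3 * z^2}. f (h t) = t"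
    proof
      fix t assume "t \<in> {(x,y,z). int (2*m) = int 2 * x^2 + int 3 * y^2 + int 3 * z^2}"
      then obtain x y z where t: "t = (x,y,z)" and e: "2 * int m = 2 * x^2 + 3 * y^2 + 3 * z^2" by auto
      have "even (3*y^2+3*z^2)" using e by (metis add_diff_cancel_left' dvd_diff dvd_triv_left add.assoc)
      then have ev: "even (y+z)" by simp
      have "(y+z) div 2 + (y-z) div 2 = y" "(y+z) div 2 - (y-z) div 2 = z" using ev by presburger+
      then show "f (h t) = t" unfolding t f_def h_def by simp
    qed
    show "f ` {(x,y,z). True \<and> x^2+3*y^2+3*z^2 = int m}
       \<subseteq> {(x,y,z). int (2*m) = int 2 * x^2 + int 3 * y^2 + int 3 * z^2}"
    proof
      fix t assume "t \<in> f ` {(x,y,z). True \<and> x^2+3*y^2+3*z^2 = int m}"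
      then obtain x u v where t: "t = f (x,u,v)" and e: "x^2+3*u^2+3*v^2 = int m" by auto
      have "2*x^2 + 3*(u+v)^2 + 3*(u-v)^2 = 2*(x^2+3*u^2+3*v^2)" by (simp add: power2_eq_square algebra_simps)
      then show "t \<in> {(x,y,z). int (2*m) = int 2 * x^2 + int 3 * y^2 + int 3 * z^2}"
        unfolding t f_def using e by simp
    qed
    show "h ` {(x,y,z). int (2*m) = int 2 * x^2 + int 3 * y^2 + int 3 * z^2}
       \<subseteq> {(x,y,z). True \<and> x^2+3*y^2+3*z^2 = int m}"
    proof
      fix t assume "t \<in> h ` {(x,y,z). int (2*m) = int 2 * x^2 + int 3 * y^2 + int 3 * z^2}"
      then obtain x y z where t: "t = h (x,y,z)" and e: "2 * int m = 2 * x^2 + 3 * y^2 + 3 * z^2" by auto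
      have "even (3*y^2+3*z^2)" using e by (metis add_diff_cancel_left' dvd_diff dvd_triv_left add.assoc)
      then have ev: "even (y+z)" by simp
      define u v where "u = (y+z) div 2" "v = (y-z) div 2"
      have yz: "y = u + v" "z = u - v" using ev u_v_def by presburger+
      have "2*x^2 + 3*(u+v)^2 + 3*(u-v)^2 = 2*(x^2+3*u^2+3*v^2)" by (simp add: power2_eq_square algebra_simps)
      then have "x^2+3*u^2+3*v^2 = int m" using e unfolding yz by simp
      moreover have "h (x,y,z) = (x,u,v)" unfolding h_def u_v_def by simp
      ultimately show "t \<in> {(x,y,z). True \<and> x^2+3*y^2+3*z^2 = int m}" unfolding t by simp
    qed
  qed
  then show ?thesis unfolding Nrep_def rr_def Qs_def by (simp add: bij_betw_same_card)
qed

lemma tri2: "2 * ((x::int) * (x + 1) div 2) = x * (x + 1)"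
  by simp

lemma lin233: "2*a = p \<Longrightarrow> 2*b = q \<Longrightarrow> 2*c = r \<Longrightarrow> 4*p + 6*q + 6*r + 4 = 4*(2*a+3*b+3*c)+(4::int)"
  by simp
lemma lin133: "2*a = p \<Longrightarrow> 2*b = q \<Longrightarrow> 2*c = r \<Longrightarrow> 4*p + 12*q + 12*r + 7 = 8*(a+3*b+3*c)+(7::int)"
  by simp
lemma linN: "L = 4*(N+1) \<Longrightarrow> L = 4*S+4 \<Longrightarrow> N = (S::int)" by simp
lemma linM: "L = 8*N+7 \<Longrightarrow> L = 8*S+7 \<Longrightarrow> N = (S::int)" by simp

lemma key233: "(2*x+1)^2 + 3*(y+z+1)^2 + 3*(y-z)^2
   = 4*(2 * ((x::int) * (x + 1) div 2) + 3 * (y * (y + 1) div 2) + 3 * (z * (z + 1) div 2)) + 4"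
proof -
  have E: "(2*x+1)^2 + 3*(y+z+1)^2 + 3*(y-z)^2 = 4*(x*(x+1)) + 6*(y*(y+1)) + 6*(z*(z+1)) + 4"
    by (simp add: power2_eq_square algebra_simps)
  show ?thesis unfolding E by (rule lin233[OF tri2 tri2 tri2])
qed

lemma key133: "(2*x+1)^2 + 3*(2*y+1)^2 + 3*(2*z+1)^2
   = 8*(((x::int) * (x + 1) div 2) + 3 * (y * (y + 1) div 2) + 3 * (z * (z + 1) div 2)) + 7"
proof -
  have E: "(2*x+1)^2 + 3*(2*y+1)^2 + 3*(2*z+1)^2 = 4*(x*(x+1)) + 12*(y*(y+1)) + 12*(z*(z+1)) + 7"
    by (simp add: power2_eq_square algebra_simps)
  show ?thesis unfolding E by (rule lin133[OF tri2 tri2 tri2])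
qed

lemma trep233: "trep 2 3 3 n = AA (int n + 1)"
proof -
  define f where "f = (\<lambda>(x::int,y::int,z::int). (2*x+1, y+z+1, y-z))"
  define h where "h = (\<lambda>(X::int,u::int,v::int). ((X-1) div 2, (u+v-1) div 2, (u-v-1) div 2))"
  define A where "A = {(x::int, y::int, z::int).
      int n = int 2 * (x * (x + 1) div 2) + int 3 * (y * (y + 1) div 2) + int 3 * (z * (z + 1) div 2)}"
  define B where "B = {(x,y,z). (odd x \<and> odd (y+z)) \<and> x^2+3*y^2+3*z^2 = 4*(int n + 1)}"
  have inv: "f (h t) = t" if "t \<in> B" for t
  proof -
    obtain X u v where t: "t = (X,u,v)" and o: "odd X" "odd (u+v)" using \<open>t \<in> B\<close> unfolding B_def by auto
    have "2*((X-1) div 2)+1 = X" "(u+v-1) div 2 + (u-v-1) div 2 + 1 = u" "(u+v-1) div 2 - (u-v-1) div 2 = v"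
      using o by presburger+
    then show ?thesis unfolding t f_def h_def by simp
  qed
  have "bij_betw f A B"
  proof (rule bij_betw_byWitness[where f'=h])
    show "\<forall>t\<in>A. h (f t) = t" unfolding f_def h_def by auto
    show "\<forall>t\<in>B. f (h t) = t" using inv by blast
    show "f ` A \<subseteq> B"
    proof
      fix t assume "t \<in> f ` A"
      then obtain x y z where t: "t = f (x,y,z)" and e: "int n = 2 * (x * (x + 1) div 2) + 3 * (y * (y + 1) div 2) + 3 * (z * (z + 1) div 2)"
        unfolding A_def by auto
      have "odd (2*x+1)" "odd (y+z+1+(y-z))" by presburger+
      then show "t \<in> B" unfolding t f_def B_def using key233[of x y z] e by simp
    qed
    show "h ` B \<subseteq> A"
    proof
      fix t assume "t \<in> h ` B"
      then obtain b where b: "b \<in> B" and t: "t = h b" by auto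
      obtain x y z where hb: "h b = (x,y,z)" by (cases "h b") auto
      have "f (x,y,z) = b" using inv[OF b] hb by simp
      then have "(2*x+1)^2 + 3*(y+z+1)^2 + 3*(y-z)^2 = 4*(int n + 1)" using b unfolding B_def f_def by auto
      then have "int n = 2 * (x * (x + 1) div 2) + 3 * (y * (y + 1) div 2) + 3 * (z * (z + 1) div 2)"
        using key233[of x y z] by (rule linN)
      then show "t \<in> A" unfolding t hb A_def by simp
    qed
  qed
  then show ?thesis unfolding trep_def AA_def Qs_def A_def[symmetric] B_def[symmetric] by (rule bij_betw_same_card)
qed

lemma trep133: "trep 1 3 3 m = C111 (8 * int m + 7)"
proof -
  define f where "f = (\<lambda>(x::int,y::int,z::int). (2*x+1, 2*y+1, 2*z+1))"
  define h where "h = (\<lambda>(X::int,Y::int,Z::int). ((X-1) div 2, (Y-1) div 2, (Z-1) div 2))"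
  define A where "A = {(x::int, y::int, z::int).
      int m = int 1 * (x * (x + 1) div 2) + int 3 * (y * (y + 1) div 2) + int 3 * (z * (z + 1) div 2)}"
  define B where "B = {(x,y,z). (odd x \<and> odd y \<and> odd z) \<and> x^2+3*y^2+3*z^2 = 8 * int m + 7}"
  have inv: "f (h t) = t" if "t \<in> B" for t
  proof -
    obtain X Y Z where t: "t = (X,Y,Z)" and o: "odd X" "odd Y" "odd Z" using \<open>t \<in> B\<close> unfolding B_def by auto
    have "2*((X-1) div 2)+1 = X" "2*((Y-1) div 2)+1 = Y" "2*((Z-1) div 2)+1 = Z"
      using o by presburger+
    then show ?thesis unfolding t f_def h_def by simp
  qed
  have "bij_betw f A B"
  proof (rule bij_betw_byWitness[where f'=h])
    show "\<forall>t\<in>A. h (f t) = t" unfolding f_def h_def by auto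
    show "\<forall>t\<in>B. f (h t) = t" using inv by blast
    show "f ` A \<subseteq> B"
    proof
      fix t assume "t \<in> f ` A"
      then obtain x y z where t: "t = f (x,y,z)" and e: "int m = (x * (x + 1) div 2) + 3 * (y * (y + 1) div 2) + 3 * (z * (z + 1) div 2)"
        unfolding A_def by auto
      have "odd (2*x+1)" "odd (2*y+1)" "odd (2*z+1)" by presburger+
      then show "t \<in> B" unfolding t f_def B_def using key133[of x y z] e by simp
    qed
    show "h ` B \<subseteq> A"
    proof
      fix t assume "t \<in> h ` B"
      then obtain b where b: "b \<in> B" and t: "t = h b" by auto
      obtain x y z where hb: "h b = (x,y,z)" by (cases "h b") auto
      have "f (x,y,z) = b" using inv[OF b] hb by simp
      then have "(2*x+1)^2 + 3*(2*y+1)^2 + 3*(2*z+1)^2 = 8 * int m + 7" using b unfolding B_def f_def by auto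
      then have "int m = (x * (x + 1) div 2) + 3 * (y * (y + 1) div 2) + 3 * (z * (z + 1) div 2)"
        using key133[of x y z] by (rule linM)
      then show "t \<in> A" unfolding t hb A_def by simp
    qed
  qed
  then show ?thesis unfolding trep_def C111_def Qs_def A_def[symmetric] B_def[symmetric] by (rule bij_betw_same_card)
qed


lemma P1a: "Nrep 2 3 3 (2*m) = Nrep 1 3 3 m"
  unfolding nrep233 nrep133 ..

lemma P1b: "trep 2 3 3 (8*m+6) = 2 * trep 1 3 3 m"
proof -
  have k: "int (8*m+6) + 1 = 8 * int m + 7" by simp
  have m7: "(8 * int m + 7) mod 8 = 7" by presburger
  show ?thesis unfolding trep233 trep133 k AA_eq s7(2)[OF m7] by simp
qed

lemma P1c: "trep 2 3 3 (32*m+27) = 4 * trep 1 3 3 m"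
proof -
  have k: "int (32*m+27) + 1 = 4 * (8 * int m + 7)" by simp
  have m7: "(8 * int m + 7) mod 8 = 7" by presburger
  show ?thesis unfolding trep233 trep133 k AA_eq ss4 s7(2)[OF m7] by simp
qed

lemma P2base: "trep 2 3 3 n = 4 * ss (int n + 1)" "Nrep 1 3 3 (n+1) = rr (int n + 1)"
   apply (simp add: trep233 AA_eq)
  unfolding nrep133 by (simp add: add.commute)

lemma P2a: "n mod 4 = 0 \<or> n mod 4 = 1 \<Longrightarrow> real (trep 2 3 3 n) = 4 * real (Nrep 1 3 3 (n + 1))"
proof -
  assume a: "n mod 4 = 0 \<or> n mod 4 = 1"
  have "(int n + 1) mod 4 = 1 \<or> (int n + 1) mod 4 = 2" using a by presburger
  then have "ss (int n + 1) = rr (int n + 1)" by (rule s12)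
  then show ?thesis unfolding P2base by simp
qed

lemma P2b: "n mod 8 = 2 \<Longrightarrow> real (trep 2 3 3 n) = 2 * real (Nrep 1 3 3 (n + 1))"
proof -
  assume a: "n mod 8 = 2"
  have "(int n + 1) mod 8 = 3" using a by presburger
  then have "rr (int n + 1) = 2 * ss (int n + 1)" by (rule s3)
  then show ?thesis unfolding P2base by simp
qed

lemma P2c: "n mod 8 = 6 \<or> n mod 32 = 27 \<Longrightarrow> real (trep 2 3 3 n) = real (Nrep 1 3 3 (n + 1))"
proof -
  assume a: "n mod 8 = 6 \<or> n mod 32 = 27"
  then show ?thesis
  proof
    assume "n mod 8 = 6"
    then have "(int n + 1) mod 8 = 7" by presburger
    then have "rr (int n + 1) = 4 * ss (int n + 1)" by (rule s7(1))
    then show ?thesis unfolding P2base by simp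
  next
    assume b: "n mod 32 = 27"
    define J where "J = (int n + 1) div 4"
    have J: "int n + 1 = 4 * J" "J mod 8 = 7" using b unfolding J_def by presburger+
    show ?thesis unfolding P2base J(1) ss4 rr4 AA_eq s7(1)[OF J(2)] by simp
  qed
qed

lemma P2d: "n mod 16 = 3 \<or> n mod 16 = 7 \<Longrightarrow> real (trep 2 3 3 n) = 8 / 5 * real (Nrep 1 3 3 (n + 1))"
proof -
  assume b: "n mod 16 = 3 \<or> n mod 16 = 7"
  define J where "J = (int n + 1) div 4"
  have J: "int n + 1 = 4 * J" "J mod 4 = 1 \<or> J mod 4 = 2" using b unfolding J_def by presburger+
  show ?thesis unfolding P2base J(1) ss4 rr4 AA_eq s12[OF J(2)] by simp
qed

lemma P2e: "n mod 32 = 11 \<Longrightarrow> real (trep 2 3 3 n) = 4 / 3 * real (Nrep 1 3 3 (n + 1))"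
proof -
  assume b: "n mod 32 = 11"
  define J where "J = (int n + 1) div 4"
  have J: "int n + 1 = 4 * J" "J mod 8 = 3" using b unfolding J_def by presburger+
  show ?thesis unfolding P2base J(1) ss4 rr4 AA_eq s3[OF J(2)] by simp
qed

theorem theorem2p1:
  shows "(\<forall>m::nat. Nrep 2 3 3 (2 * m) = Nrep 1 3 3 m
            \<and> trep 2 3 3 (8 * m + 6) = 2 * trep 1 3 3 m
            \<and> trep 2 3 3 (32 * m + 27) = 4 * trep 1 3 3 m)
       \<and> (\<forall>n::nat. n > 0 \<longrightarrow> n mod 16 \<noteq> 15 \<longrightarrow>
            ((n mod 4 = 0 \<or> n mod 4 = 1) \<longrightarrow>
                real (trep 2 3 3 n) = 4 * real (Nrep 1 3 3 (n + 1)))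
          \<and> (n mod 8 = 2 \<longrightarrow>
                real (trep 2 3 3 n) = 2 * real (Nrep 1 3 3 (n + 1)))
          \<and> ((n mod 8 = 6 \<or> n mod 32 = 27) \<longrightarrow>
                real (trep 2 3 3 n) = real (Nrep 1 3 3 (n + 1)))
          \<and> ((n mod 16 = 3 \<or> n mod 16 = 7) \<longrightarrow>
                real (trep 2 3 3 n) = 8 / 5 * real (Nrep 1 3 3 (n + 1)))
          \<and> (n mod 32 = 11 \<longrightarrow>
                real (trep 2 3 3 n) = 4 / 3 * real (Nrep 1 3 3 (n + 1))))"
proof (intro conjI allI impI)
  fix m :: nat
  show "Nrep 2 3 3 (2 * m) = Nrep 1 3 3 m" by (rule P1a)
  show "trep 2 3 3 (8 * m + 6) = 2 * trep 1 3 3 m" by (rule P1b)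
  show "trep 2 3 3 (32 * m + 27) = 4 * trep 1 3 3 m" by (rule P1c)
next
  fix n :: nat
  show "n mod 4 = 0 \<or> n mod 4 = 1 \<Longrightarrow> real (trep 2 3 3 n) = 4 * real (Nrep 1 3 3 (n + 1))" by (rule P2a)
  show "n mod 8 = 2 \<Longrightarrow> real (trep 2 3 3 n) = 2 * real (Nrep 1 3 3 (n + 1))" by (rule P2b)
  show "n mod 8 = 6 \<or> n mod 32 = 27 \<Longrightarrow> real (trep 2 3 3 n) = real (Nrep 1 3 3 (n + 1))" by (rule P2c)
  show "n mod 16 = 3 \<or> n mod 16 = 7 \<Longrightarrow> real (trep 2 3 3 n) = 8 / 5 * real (Nrep 1 3 3 (n + 1))" by (rule P2d)
  show "n mod 32 = 11 \<Longrightarrow> real (trep 2 3 3 n) = 4 / 3 * real (Nrep 1 3 3 (n + 1))" by (rule P2e)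
qed

end
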